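(* Suppose Assumptions A, B($\gamma$), C($\gamma$) are satisfied for some $\gamma\in(0,1]$. Then for any $\tau,R\in(0,\infty)$, $$\int_{-\tau}^{\tau}\int_{B_R(0)}\big(|\mathfrak{b}_s(x)|^{p'}+|b_s(x)|^{p'}+c_s^{p'}(x)\big)\,dx\,ds<\infty.$$
   Context: Fix $d\ge1$, $p\in(1,\infty)$, $p'=p/(p-1)$. $B_\rho(x)$ is the open ball in $\mathbb{R}^d$. Coefficients $a^{ij}_t(x),\mathfrak{b}^i_t(x),b^i_t(x),c_t(x)$ on $\mathbb{R}\times\mathbb{R}^d$; $\mathfrak{b}=(\mathfrak{b}^i)$, $b=(b^i)$. Fixed constants: $K\ge0$, $\rho_0,\rho_1\in(0,1]$, $q=q(d,p)$ with $q>\min(d,p)$, $q>\min(d,p')$, $q\ge\max(d,p,p')$. Assumption A: (i) $a,\mathfrak{b},b,c$ real-valued Borel measurable, $c\ge0$; (ii) there is $\delta>0$ with $a^{ij}\xi^i\xi^j\ge\delta|\xi|^2$, $|a^{ij}|\le\delta^{-1}$; (iii) for every $x$, $t\mapsto\int_{B_1(0)}(|\mathfrak{b}_t(x+y)|+|b_t(x+y)|+c_t(x+y))\,dy$ is locally integrable to the power $p'$ on $\mathbb{R}$. Assumption B($\gamma$): for all $(t,x)$, $\int_{B_{\rho_1}(x)}\int_{B_{\rho_1}(x)}(|\mathfrak{b}_t(y)-\mathfrak{b}_t(z)|^q+|b_t(y)-b_t(z)|^q+|c_t(y)-c_t(z)|^q)\,dy\,dz\le K1_{q>d}+\rho_1^d\gamma$.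 Assumption C($\gamma$): for all $\rho\in(0,\rho_0]$, $s\in\mathbb{R}$, $i,j$: $\rho^{-2d-2}\int_s^{s+\rho^2}\sup_{x}\int_{B_\rho(x)}\int_{B_\rho(x)}|a^{ij}_t(y)-a^{ij}_t(z)|\,dy\,dz\,dt\le\gamma$. *)

theory Defs
  imports "HOL-Analysis.Analysis"
begin

text \<open>Setting: the space R^d is modelled as real^'n with d = CARD('n) (so d >= 1).
  Coefficients: a t x i j = a^{ij}_t(x); fb t x = \<frak>b_t(x) (vector); b t x = b_t(x); c t x = c_t(x).\<close>

definition conj_exp :: "real \<Rightarrow> real" where
  "conj_exp p = p / (p - 1)"

definition assumptionA ::
  "real \<Rightarrow> (real \<Rightarrow> real^'n \<Rightarrow> 'n \<Rightarrow> 'n \<Rightarrow> real) \<Rightarrow> (real \<Rightarrow> real^'n \<Rightarrow> real^'n)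
   \<Rightarrow> (real \<Rightarrow> real^'n \<Rightarrow> real^'n) \<Rightarrow> (real \<Rightarrow> real^'n \<Rightarrow> real) \<Rightarrow> bool" where
  "assumptionA p a fb b c \<longleftrightarrow>
     \<comment> \<open>(i) Borel measurability (jointly in (t,x)) and c >= 0\<close>
     (\<forall>i j. (\<lambda>(t,x). a t x i j) \<in> borel_measurable (borel :: (real \<times> (real^'n)) measure)) \<and>
     (\<lambda>(t,x). fb t x) \<in> borel_measurable (borel :: (real \<times> (real^'n)) measure) \<and>
     (\<lambda>(t,x). b t x) \<in> borel_measurable (borel :: (real \<times> (real^'n)) measure) \<and>
     (\<lambda>(t,x). c t x) \<in> borel_measurable (borel :: (real \<times> (real^'n)) measure) \<and>
     (\<forall>t x. c t x \<ge> 0) \<and>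
     \<comment> \<open>(ii) uniform ellipticity and boundedness\<close>
     (\<exists>\<delta>>0. \<forall>t x. (\<forall>\<xi>::real^'n. (\<Sum>i\<in>UNIV. \<Sum>j\<in>UNIV. a t x i j * \<xi>$i * \<xi>$j) \<ge> \<delta> * (norm \<xi>)\<^sup>2)
                  \<and> (\<forall>i j. \<bar>a t x i j\<bar> \<le> 1 / \<delta>)) \<and>
     \<comment> \<open>(iii) for every x, t \<mapsto> \<integral>_{B_1(0)} (|fb_t(x+y)| + |b_t(x+y)| + c_t(x+y)) dy is in L^{p'}_loc(R)\<close>
     (\<forall>x::real^'n. \<forall>\<alpha> \<beta>::real.
        let F = (\<lambda>t. \<integral>\<^sup>+ y \<in> ball 0 1. ennreal (norm (fb t (x + y)) + norm (b t (x + y)) + c t (x + y)) \<partial>lborel)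
        in (AE t \<in> {\<alpha>..\<beta>} in lborel. F t < \<infinity>) \<and>
           (\<integral>\<^sup>+ t \<in> {\<alpha>..\<beta>}. ennreal (enn2real (F t) powr conj_exp p) \<partial>lborel) < \<infinity>)"

definition assumptionB ::
  "real \<Rightarrow> real \<Rightarrow> real \<Rightarrow> real \<Rightarrow> (real \<Rightarrow> real^'n \<Rightarrow> real^'n)
   \<Rightarrow> (real \<Rightarrow> real^'n \<Rightarrow> real^'n) \<Rightarrow> (real \<Rightarrow> real^'n \<Rightarrow> real) \<Rightarrow> bool" where
  "assumptionB q K \<rho>\<^sub>1 \<gamma> fb b c \<longleftrightarrow>
     (\<forall>t x::real^'n.
        (\<integral>\<^sup>+ y \<in> ball x \<rho>\<^sub>1. \<integral>\<^sup>+ z \<in> ball x \<rho>\<^sub>1.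
            ennreal (norm (fb t y - fb t z) powr q + norm (b t y - b t z) powr q
                     + \<bar>c t y - c t z\<bar> powr q) \<partial>lborel \<partial>lborel)
        \<le> ennreal (K * (if q > real CARD('n) then 1 else 0) + \<rho>\<^sub>1 ^ CARD('n) * \<gamma>))"

definition assumptionC ::
  "real \<Rightarrow> real \<Rightarrow> (real \<Rightarrow> real^'n \<Rightarrow> 'n \<Rightarrow> 'n \<Rightarrow> real) \<Rightarrow> bool" where
  "assumptionC \<rho>\<^sub>0 \<gamma> a \<longleftrightarrow>
     (\<forall>\<rho> s i j. 0 < \<rho> \<and> \<rho> \<le> \<rho>\<^sub>0 \<longrightarrow>
        ennreal (\<rho> powr (- 2 * real CARD('n) - 2)) *
        (\<integral>\<^sup>+ t \<in> {s..s + \<rho>\<^sup>2}. (SUP x::real^'n. \<integral>\<^sup>+ y \<in> ball x \<rho>. \<integral>\<^sup>+ z \<in> ball x \<rho>.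
              ennreal \<bar>a t y i j - a t z i j\<bar> \<partial>lborel \<partial>lborel) \<partial>lborel)
        \<le> ennreal \<gamma>)"

end

theory Submission
  imports Defs
begin

lemma pow_split:
  fixes u v w r q :: real
  assumes "1 \<le> r" "r \<le> q" "0 \<le> u" "0 \<le> v" "0 \<le> w" "u \<le> w + v"
  shows "u powr r \<le> 2 powr r * (1 + w powr q + v powr r)"
proof -
  have "u \<le> 2 * max w v" using assms by linarith
  hence "u powr r \<le> (2 * max w v) powr r" using assms by (intro powr_mono2) auto
  also have "\<dots> = 2 powr r * max w v powr r" using assms by (simp add: powr_mult)
  also have "max w v powr r \<le> 1 + w powr q + v powr r"
  proof (cases "w \<le> v")
    case True then show ?thesis using assms by (simp add: max_def)
  next
    case False
    hence mx: "max w v = w" by simp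
    have "w powr r \<le> 1 + w powr q"
    proof (cases "w \<le> 1")
      case True
      hence "w powr r \<le> 1" using assms powr_mono2[of r w 1] by simp
      then show ?thesis by (smt (verit) powr_ge_zero)
    next
      case False
      hence "w powr r \<le> w powr q" using assms by (intro powr_mono) auto
      then show ?thesis by simp
    qed
    then show ?thesis using mx by (smt (verit) powr_ge_zero)
  qed
  hence "2 powr r * max w v powr r \<le> 2 powr r * (1 + w powr q + v powr r)"
    by (intro mult_left_mono) auto
  finally show ?thesis .
qed

lemma local_bound:
  fixes f1 f2 :: "'a::euclidean_space \<Rightarrow> 'b::euclidean_space" and f3 :: "'a \<Rightarrow> real"
  assumes m1[measurable]: "f1 \<in> borel_measurable borel" and m2[measurable]: "f2 \<in> borel_measurable borel"
    and m3[measurable]: "f3 \<in> borel_measurable borel" and nn: "\<And>z. f3 z \<ge> 0"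
    and r: "1 \<le> r" "r \<le> q" and Mpos: "0 < M" and rho: "0 < \<rho>"
    and hB: "(\<integral>\<^sup>+ y \<in> ball x0 \<rho>. \<integral>\<^sup>+ z \<in> ball x0 \<rho>. ennreal (norm (f1 y - f1 z) powr q + norm (f2 y - f2 z) powr q + \<bar>f3 y - f3 z\<bar> powr q) \<partial>lborel \<partial>lborel) \<le> ennreal M"
    and hG: "(\<integral>\<^sup>+ z \<in> ball x0 \<rho>. ennreal (norm (f1 z) + norm (f2 z) + f3 z) \<partial>lborel) \<le> ennreal Gv"
    and Gv: "0 \<le> Gv"
  shows "(\<integral>\<^sup>+ z \<in> ball x0 \<rho>. ennreal (norm (f1 z) powr r + norm (f2 z) powr r + f3 z powr r) \<partial>lborel)
     \<le> ennreal (3 * 2 powr r * (measure lborel (ball x0 \<rho>) + 4 * M / measure lborel (ball x0 \<rho>)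
          + measure lborel (ball x0 \<rho>) * (4 * (Gv + 1) / measure lborel (ball x0 \<rho>)) powr r))"
proof -
  define B where "B = ball x0 \<rho>"
  define m where "m = measure lborel B"
  have mpos: "0 < m" using content_ball_pos[OF rho] by (simp add: m_def B_def)
  have emB: "emeasure lborel B = ennreal m"
    unfolding m_def B_def using emeasure_lborel_ball_finite[of x0 \<rho>]
    by (intro emeasure_eq_ennreal_measure) simp
  have Bsets[measurable]: "B \<in> sets borel" unfolding B_def by simp
  define D where "D y z = norm (f1 y - f1 z) powr q + norm (f2 y - f2 z) powr q + \<bar>f3 y - f3 z\<bar> powr q" for y z
  define g where "g z = norm (f1 z) + norm (f2 z) + f3 z" for z
  define \<phi> where "\<phi> y = (\<integral>\<^sup>+ z. ennreal (D y z) * indicator B z \<partial>lborel)" for y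
  have Dmeas: "(\<lambda>(y,z). ennreal (D y z) * indicator B z) \<in> borel_measurable (lborel \<Otimes>\<^sub>M lborel)"
    using m1 m2 m3 Bsets unfolding D_def measurable_lborel1[symmetric] sets_lborel[symmetric] by measurable
  have phimeas[measurable]: "\<phi> \<in> borel_measurable lborel"
    unfolding \<phi>_def using lborel.borel_measurable_nn_integral[OF Dmeas] by simp
  have gmeas[measurable]: "g \<in> borel_measurable borel" unfolding g_def by measurable
  have hB': "(\<integral>\<^sup>+ y. \<phi> y * indicator B y \<partial>lborel) \<le> ennreal M"
    using hB unfolding \<phi>_def D_def B_def .
  have hG': "(\<integral>\<^sup>+ y. ennreal (g y) * indicator B y \<partial>lborel) \<le> ennreal Gv"
    using hG unfolding g_def B_def .
  have "\<exists>y0\<in>B. \<phi> y0 \<le> ennreal (4*M/m) \<and> g y0 \<le> 4*(Gv+1)/m"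
  proof (rule ccontr)
    assume nt: "\<not> ?thesis"
    have bad: "1 \<le> ennreal (m/(4*M)) * \<phi> y + ennreal (m/(4*(Gv+1))) * ennreal (g y)" if "y \<in> B" for y
    proof (cases "\<phi> y \<le> ennreal (4*M/m)")
      case True
      hence gy: "g y > 4*(Gv+1)/m" using nt that by auto
      have "1 \<le> m/(4*(Gv+1)) * g y" using gy mpos Gv by (simp add: field_simps)
      hence "ennreal 1 \<le> ennreal (m/(4*(Gv+1)) * g y)" by (rule ennreal_leI)
      moreover have "ennreal (m/(4*(Gv+1))) * ennreal (g y) = ennreal (m/(4*(Gv+1)) * g y)"
        by (rule ennreal_mult'[symmetric]) (use mpos Gv in simp)
      ultimately have "1 \<le> ennreal (m/(4*(Gv+1))) * ennreal (g y)" by simp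
      then show ?thesis by (meson add_increasing order_trans zero_le)
    next
      case False
      hence "ennreal (4*M/m) \<le> \<phi> y" by simp
      hence "ennreal (m/(4*M)) * ennreal (4*M/m) \<le> ennreal (m/(4*M)) * \<phi> y" by (rule mult_left_mono) simp
      moreover have "ennreal (m/(4*M)) * ennreal (4*M/m) = 1"
        using mpos Mpos by (simp add: ennreal_mult''[symmetric])
      ultimately show ?thesis by (metis add_increasing2 zero_le)
    qed
    have "ennreal m = (\<integral>\<^sup>+ y. 1 * indicator B y \<partial>lborel)" using emB by simp
    also have "\<dots> \<le> (\<integral>\<^sup>+ y. (ennreal (m/(4*M)) * \<phi> y + ennreal (m/(4*(Gv+1))) * ennreal (g y)) * indicator B y \<partial>lborel)"
      using bad by (intro nn_integral_mono) (auto simp: indicator_def)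
    also have "\<dots> = (\<integral>\<^sup>+ y. ennreal (m/(4*M)) * (\<phi> y * indicator B y) + ennreal (m/(4*(Gv+1))) * (ennreal (g y) * indicator B y) \<partial>lborel)"
      by (simp add: distrib_right mult.assoc)
    also have "\<dots> = ennreal (m/(4*M)) * (\<integral>\<^sup>+ y. \<phi> y * indicator B y \<partial>lborel) + ennreal (m/(4*(Gv+1))) * (\<integral>\<^sup>+ y. ennreal (g y) * indicator B y \<partial>lborel)"
      apply (subst nn_integral_add)
      subgoal by measurable
      subgoal by measurable
      apply (subst nn_integral_cmult)
      subgoal by measurable
      apply (subst nn_integral_cmult)
      subgoal by measurable
      by (rule refl)
    also have "\<dots> \<le> ennreal (m/(4*M)) * ennreal M + ennreal (m/(4*(Gv+1))) * ennreal Gv"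
      by (intro add_mono mult_left_mono hB' hG') auto
    also have "\<dots> = ennreal (m/4 + m * Gv / (4*(Gv+1)))"
      using mpos Mpos Gv by (simp add: ennreal_mult''[symmetric] ennreal_plus[symmetric] del: ennreal_plus)
    finally have "m \<le> m/4 + m * Gv / (4*(Gv+1))"
      using mpos Gv by (subst (asm) ennreal_le_iff) (auto simp: divide_nonneg_pos)
    moreover have "m * Gv / (4*(Gv+1)) \<le> m/4" using mpos Gv by (simp add: field_simps)
    ultimately show False using mpos by linarith
  qed
  then obtain y0 where y0: "y0 \<in> B" "\<phi> y0 \<le> ennreal (4*M/m)" "g y0 \<le> 4*(Gv+1)/m" by blast
  define g0 where "g0 = g y0"
  have g0nn: "0 \<le> g0" unfolding g0_def g_def using nn[of y0] by simp
  have Dy0: "(\<lambda>z. D y0 z) \<in> borel_measurable borel" unfolding D_def by measurable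
  have pt: "norm (f1 z) powr r + norm (f2 z) powr r + f3 z powr r \<le> 3 * 2 powr r * (1 + g0 powr r + D y0 z)" for z
  proof -
    have a1: "norm (f1 z) powr r \<le> 2 powr r * (1 + norm (f1 y0 - f1 z) powr q + g0 powr r)"
    proof (rule pow_split[OF r])
      have "norm (f1 z) \<le> norm (f1 y0) + norm (f1 y0 - f1 z)" using norm_triangle_ineq4[of "f1 y0" "f1 y0 - f1 z"] by simp
      then show "norm (f1 z) \<le> norm (f1 y0 - f1 z) + g0" unfolding g0_def g_def using nn[of y0] norm_ge_zero[of "f2 y0"] by linarith
    qed (use g0nn in auto)
    have a2: "norm (f2 z) powr r \<le> 2 powr r * (1 + norm (f2 y0 - f2 z) powr q + g0 powr r)"
    proof (rule pow_split[OF r])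
      have "norm (f2 z) \<le> norm (f2 y0) + norm (f2 y0 - f2 z)" using norm_triangle_ineq4[of "f2 y0" "f2 y0 - f2 z"] by simp
      then show "norm (f2 z) \<le> norm (f2 y0 - f2 z) + g0" unfolding g0_def g_def using nn[of y0] norm_ge_zero[of "f1 y0"] by linarith
    qed (use g0nn in auto)
    have a3: "f3 z powr r \<le> 2 powr r * (1 + \<bar>f3 y0 - f3 z\<bar> powr q + g0 powr r)"
    proof (rule pow_split[OF r])
      show "f3 z \<le> \<bar>f3 y0 - f3 z\<bar> + g0" unfolding g0_def g_def using norm_ge_zero[of "f1 y0"] norm_ge_zero[of "f2 y0"] by linarith
    qed (use g0nn nn in auto)
    have "0 \<le> 2 powr r * norm (f1 y0 - f1 z) powr q" "0 \<le> 2 powr r * norm (f2 y0 - f2 z) powr q"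
      "0 \<le> 2 powr r * \<bar>f3 y0 - f3 z\<bar> powr q" "0 \<le> 2 powr r * g0 powr r" "0 \<le> 2 powr r" by simp_all
    moreover note a1 a2 a3
    ultimately show ?thesis unfolding D_def by (simp only: ring_distribs mult_1_right)
  qed
  have "(\<integral>\<^sup>+ z. ennreal (norm (f1 z) powr r + norm (f2 z) powr r + f3 z powr r) * indicator B z \<partial>lborel)
     \<le> (\<integral>\<^sup>+ z. ennreal (3 * 2 powr r) * (ennreal (1 + g0 powr r) * indicator B z + ennreal (D y0 z) * indicator B z) \<partial>lborel)"
  proof (intro nn_integral_mono)
    fix z
    have "ennreal (norm (f1 z) powr r + norm (f2 z) powr r + f3 z powr r) \<le> ennreal (3 * 2 powr r * (1 + g0 powr r + D y0 z))"
      using pt[of z] by (rule ennreal_leI)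
    also have "\<dots> = ennreal (3 * 2 powr r) * (ennreal (1 + g0 powr r) + ennreal (D y0 z))"
      unfolding D_def by (simp add: ennreal_mult''[symmetric] ennreal_plus[symmetric] del: ennreal_plus)
    finally show "ennreal (norm (f1 z) powr r + norm (f2 z) powr r + f3 z powr r) * indicator B z
       \<le> ennreal (3 * 2 powr r) * (ennreal (1 + g0 powr r) * indicator B z + ennreal (D y0 z) * indicator B z)"
      by (auto simp: indicator_def)
  qed
  also have "\<dots> = ennreal (3 * 2 powr r) * (ennreal (1 + g0 powr r) * ennreal m + \<phi> y0)"
    unfolding \<phi>_def
    apply (subst nn_integral_cmult)
    subgoal using Dy0 Bsets by measurable
    apply (subst nn_integral_add)
    subgoal using Dy0 Bsets by measurable
    subgoal using Dy0 Bsets by measurable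
    using emB by (simp add: nn_integral_cmult_indicator)
  also have "\<dots> \<le> ennreal (3 * 2 powr r) * (ennreal ((1 + g0 powr r) * m) + ennreal (4*M/m))"
    using y0 mpos by (intro mult_left_mono add_mono) (auto simp: ennreal_mult'')
  also have "\<dots> = ennreal (3 * 2 powr r * ((1 + g0 powr r) * m + 4*M/m))"
    using mpos Mpos by (simp add: ennreal_mult''[symmetric] ennreal_plus[symmetric] del: ennreal_plus)
  also have "\<dots> \<le> ennreal (3 * 2 powr r * (m + 4 * M / m + m * (4 * (Gv + 1) / m) powr r))"
  proof (intro ennreal_leI mult_left_mono)
    have "g0 powr r \<le> (4 * (Gv + 1) / m) powr r" using y0 g0nn r unfolding g0_def by (intro powr_mono2) auto
    then show "(1 + g0 powr r) * m + 4 * M / m \<le> m + 4 * M / m + m * (4 * (Gv + 1) / m) powr r"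
      using mpos by (simp add: algebra_simps)
  qed simp
  finally show ?thesis unfolding B_def m_def .
qed


lemma pair_borel_cong: "measurable (lborel \<Otimes>\<^sub>M lborel) N = measurable (borel \<Otimes>\<^sub>M borel) N"
  by (intro measurable_cong_sets sets_pair_measure_cong) simp_all

lemma slice_translate:
  fixes G :: "'a::euclidean_space \<Rightarrow> real"
  assumes Gm[measurable]: "G \<in> borel_measurable borel" and rho: "\<rho> \<le> 1"
  shows "(\<integral>\<^sup>+ z\<in>ball x \<rho>. ennreal (G z) \<partial>lborel) \<le> (\<integral>\<^sup>+ y\<in>ball 0 1. ennreal (G (x + y)) \<partial>lborel)"
proof -
  have "(\<integral>\<^sup>+ z\<in>ball x \<rho>. ennreal (G z) \<partial>lborel) \<le> (\<integral>\<^sup>+ z. ennreal (G z) * indicator (ball x 1) z \<partial>lborel)"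
    using rho by (intro nn_integral_mono) (auto simp: indicator_def)
  also have "\<dots> = (\<integral>\<^sup>+ z. ennreal (G z) * indicator (ball x 1) z \<partial>(distr lborel borel ((+) x)))"
    by (simp add: lborel_distr_plus)
  also have "\<dots> = (\<integral>\<^sup>+ y. ennreal (G (x + y)) * indicator (ball x 1) (x + y) \<partial>lborel)"
    apply (subst nn_integral_distr)
    subgoal by simp
    subgoal using Gm by (intro borel_measurable_times_ennreal borel_measurable_indicator) auto
    by simp
  also have "\<dots> = (\<integral>\<^sup>+ y\<in>ball 0 1. ennreal (G (x + y)) \<partial>lborel)"
    by (intro nn_integral_cong) (auto simp: indicator_def dist_norm)
  finally show ?thesis .
qed

lemma const_bound:
  fixes m M Gv r :: real
  assumes m: "0 < m" and r: "1 \<le> r" and Gv: "0 \<le> Gv"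
  shows "3 * 2 powr r * (m + 4 * M / m + m * (4 * (Gv + 1) / m) powr r)
    \<le> 3 * 2 powr r * (m + 4*M/m + 2 * m * (8/m) powr r) + 3 * 2 powr r * m * (8/m) powr r * Gv powr r"
proof -
  have e1: "(4 * (Gv + 1) / m) powr r = (4/m) powr r * (Gv+1) powr r"
    using assms by (subst powr_mult[symmetric]) (auto simp: field_simps)
  have e2: "(8/m) powr r = 2 powr r * (4/m) powr r"
    using assms by (subst powr_mult[symmetric]) (auto simp: field_simps)
  have b: "(Gv+1) powr r \<le> 2 powr r * (2 + Gv powr r)" using pow_split[of r r "Gv+1" Gv 1] assms by simp
  have "m * ((4/m) powr r * (Gv+1) powr r) \<le> m * ((4/m) powr r * (2 powr r * (2 + Gv powr r)))"
    using b m by (intro mult_left_mono) auto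
  also have "\<dots> = 2 * m * (8/m) powr r + m * (8/m) powr r * Gv powr r"
    unfolding e2 by (simp add: algebra_simps)
  finally have Z: "m * (4 * (Gv + 1) / m) powr r \<le> 2 * m * (8/m) powr r + m * (8/m) powr r * Gv powr r"
    unfolding e1 .
  have "3 * 2 powr r * (m + 4 * M / m + m * (4 * (Gv + 1) / m) powr r)
      \<le> 3 * 2 powr r * (m + 4 * M / m + (2 * m * (8/m) powr r + m * (8/m) powr r * Gv powr r))"
    using Z by (intro mult_left_mono) auto
  also have "\<dots> = 3 * 2 powr r * (m + 4*M/m + 2 * m * (8/m) powr r) + 3 * 2 powr r * m * (8/m) powr r * Gv powr r"
    by (simp add: algebra_simps)
  finally show ?thesis .
qed


theorem lemma6p1:
  fixes p q K \<rho>\<^sub>0 \<rho>\<^sub>1 \<gamma> \<tau> R :: real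
    and a :: "real \<Rightarrow> real^'n \<Rightarrow> 'n \<Rightarrow> 'n \<Rightarrow> real"
    and fb b :: "real \<Rightarrow> real^'n \<Rightarrow> real^'n"
    and c :: "real \<Rightarrow> real^'n \<Rightarrow> real"
  assumes "1 < p"
    and "q > min (real CARD('n)) p" and "q > min (real CARD('n)) (conj_exp p)"
    and "q \<ge> max (real CARD('n)) (max p (conj_exp p))"
    and "K \<ge> 0" and "0 < \<rho>\<^sub>0" "\<rho>\<^sub>0 \<le> 1" and "0 < \<rho>\<^sub>1" "\<rho>\<^sub>1 \<le> 1"
    and "0 < \<gamma>" "\<gamma> \<le> 1"
    and "assumptionA p a fb b c"
    and "assumptionB q K \<rho>\<^sub>1 \<gamma> fb b c"
    and "assumptionC \<rho>\<^sub>0 \<gamma> a"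
    and "0 < \<tau>" and "0 < R"
  shows "(\<integral>\<^sup>+ s \<in> {-\<tau>..\<tau>}. \<integral>\<^sup>+ x \<in> ball (0::real^'n) R.
            ennreal (norm (fb s x) powr conj_exp p + norm (b s x) powr conj_exp p
                     + c s x powr conj_exp p) \<partial>lborel \<partial>lborel) < \<infinity>"
proof -
  define r where "r = conj_exp p"
  have r1: "1 \<le> r" using assms(1) by (simp add: r_def conj_exp_def)
  have rq: "r \<le> q" using assms(4) by (simp add: r_def)
  note A = assms(12)[unfolded assumptionA_def]
  have fbm[measurable]: "(\<lambda>(t,x). fb t x) \<in> borel_measurable (borel \<Otimes>\<^sub>M borel)"
    using A by (simp add: borel_prod)
  have bm[measurable]: "(\<lambda>(t,x). b t x) \<in> borel_measurable (borel \<Otimes>\<^sub>M borel)"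
    using A by (simp add: borel_prod)
  have cm[measurable]: "(\<lambda>(t,x). c t x) \<in> borel_measurable (borel \<Otimes>\<^sub>M borel)"
    using A by (simp add: borel_prod)
  have cnn: "\<And>t x. 0 \<le> c t x" using A by blast
  define F where "F x t = (\<integral>\<^sup>+ y \<in> ball 0 1. ennreal (norm (fb t (x + y)) + norm (b t (x + y)) + c t (x + y)) \<partial>lborel)" for x t
  have A3: "(AE t \<in> {-\<tau>..\<tau>} in lborel. F x t < \<infinity>) \<and> (\<integral>\<^sup>+ t \<in> {-\<tau>..\<tau>}. ennreal (enn2real (F x t) powr r) \<partial>lborel) < \<infinity>" for x
  proof -
    from A have "\<forall>x::real^'n. \<forall>\<alpha> \<beta>::real.
        let F = (\<lambda>t. \<integral>\<^sup>+ y \<in> ball 0 1. ennreal (norm (fb t (x + y)) + norm (b t (x + y)) + c t (x + y)) \<partial>lborel)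
        in (AE t \<in> {\<alpha>..\<beta>} in lborel. F t < \<infinity>) \<and>
           (\<integral>\<^sup>+ t \<in> {\<alpha>..\<beta>}. ennreal (enn2real (F t) powr conj_exp p) \<partial>lborel) < \<infinity>" by blast
    then show ?thesis unfolding Let_def F_def r_def by blast
  qed
  define M where "M = K * (if q > real CARD('n) then 1 else 0) + \<rho>\<^sub>1 ^ CARD('n) * \<gamma>"
  have Mpos: "0 < M" using assms(5,8,10) unfolding M_def by (intro add_nonneg_pos) auto
  have hB: "(\<integral>\<^sup>+ y \<in> ball x \<rho>\<^sub>1. \<integral>\<^sup>+ z \<in> ball x \<rho>\<^sub>1. ennreal (norm (fb t y - fb t z) powr q + norm (b t y - b t z) powr q + \<bar>c t y - c t z\<bar> powr q) \<partial>lborel \<partial>lborel) \<le> ennreal M" for t x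
    using assms(13) unfolding assumptionB_def M_def by blast
  obtain k where k: "finite k" "ball (0::real^'n) R \<subseteq> (\<Union>x\<in>k. ball x \<rho>\<^sub>1)"
  proof -
    have "compact (cball (0::real^'n) R)" by simp
    then obtain k where "finite k" "cball (0::real^'n) R \<subseteq> (\<Union>x\<in>k. ball x \<rho>\<^sub>1)"
      using assms(8) unfolding compact_eq_totally_bounded by blast
    then show ?thesis using that ball_subset_cball by blast
  qed
  define h where "h t z = norm (fb t z) powr r + norm (b t z) powr r + c t z powr r" for t z
  define mm where "mm x = measure lborel (ball x \<rho>\<^sub>1)" for x :: "real^'n"
  define C1 where "C1 x = 3 * 2 powr r * (mm x + 4*M/mm x + 2 * mm x * (8/mm x) powr r)" for x
  define C2 where "C2 x = 3 * 2 powr r * mm x * (8/mm x) powr r" for x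
  have mmpos: "0 < mm x" for x using content_ball_pos[OF assms(8)] by (simp add: mm_def)
  have C1nn: "0 \<le> C1 x" for x using mmpos[of x] Mpos by (simp add: C1_def)
  have C2nn: "0 \<le> C2 x" for x using mmpos[of x] by (simp add: C2_def)
  have ball_sets[measurable]: "ball x r \<in> sets borel" for x :: "real^'n" and r :: real by simp
  have fbt[measurable]: "(\<lambda>z. fb t z) \<in> borel_measurable borel" for t by measurable
  have bt[measurable]: "(\<lambda>z. b t z) \<in> borel_measurable borel" for t by measurable
  have ct[measurable]: "(\<lambda>z. c t z) \<in> borel_measurable borel" for t by measurable
  have ht[measurable]: "(\<lambda>z. h t z) \<in> borel_measurable borel" for t unfolding h_def by measurable
  have slice: "(\<integral>\<^sup>+ z \<in> ball x \<rho>\<^sub>1. ennreal (h t z) \<partial>lborel) \<le> ennreal (C1 x + C2 x * enn2real (F x t) powr r)"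
    if "F x t < \<infinity>" for x t
  proof -
    define Gv where "Gv = enn2real (F x t)"
    have Gv0: "0 \<le> Gv" by (simp add: Gv_def)
    have FG: "F x t = ennreal Gv" using that by (simp add: Gv_def)
    have hG: "(\<integral>\<^sup>+ z \<in> ball x \<rho>\<^sub>1. ennreal (norm (fb t z) + norm (b t z) + c t z) \<partial>lborel) \<le> ennreal Gv"
      unfolding FG[symmetric] F_def
      by (rule slice_translate[where G="\<lambda>z. norm (fb t z) + norm (b t z) + c t z"]) (measurable, rule assms(9))
    have "(\<integral>\<^sup>+ z \<in> ball x \<rho>\<^sub>1. ennreal (h t z) \<partial>lborel)
        \<le> ennreal (3 * 2 powr r * (mm x + 4 * M / mm x + mm x * (4 * (Gv + 1) / mm x) powr r))"
      unfolding h_def mm_def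
      by (rule local_bound[OF _ _ _ _ r1 rq Mpos assms(8) hB hG Gv0]) (use cnn in auto)
    also have "\<dots> \<le> ennreal (C1 x + C2 x * Gv powr r)"
      unfolding C1_def C2_def using const_bound[OF mmpos[of x] r1 Gv0, of M]
      by (intro ennreal_leI) (simp add: algebra_simps)
    finally show ?thesis by (simp add: Gv_def)
  qed
  have space: "(\<integral>\<^sup>+ z \<in> ball 0 R. ennreal (h t z) \<partial>lborel) \<le> (\<Sum>x\<in>k. \<integral>\<^sup>+ z \<in> ball x \<rho>\<^sub>1. ennreal (h t z) \<partial>lborel)" for t
  proof -
    have "(\<integral>\<^sup>+ z \<in> ball 0 R. ennreal (h t z) \<partial>lborel) \<le> (\<integral>\<^sup>+ z. (\<Sum>x\<in>k. ennreal (h t z) * indicator (ball x \<rho>\<^sub>1) z) \<partial>lborel)"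
    proof (intro nn_integral_mono)
      fix z
      show "ennreal (h t z) * indicator (ball 0 R) z \<le> (\<Sum>x\<in>k. ennreal (h t z) * indicator (ball x \<rho>\<^sub>1) z)"
      proof (cases "z \<in> ball 0 R")
        case True
        then obtain x where x: "x \<in> k" "z \<in> ball x \<rho>\<^sub>1" using k by blast
        have "ennreal (h t z) * indicator (ball 0 R) z = ennreal (h t z) * indicator (ball x \<rho>\<^sub>1) z"
          using True x by simp
        also have "\<dots> \<le> (\<Sum>x\<in>k. ennreal (h t z) * indicator (ball x \<rho>\<^sub>1) z)"
          by (rule member_le_sum) (use x k in auto)
        finally show ?thesis .
      qed simp
    qed
    also have "\<dots> = (\<Sum>x\<in>k. \<integral>\<^sup>+ z \<in> ball x \<rho>\<^sub>1. ennreal (h t z) \<partial>lborel)"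
      by (rule nn_integral_sum) measurable
    finally show ?thesis .
  qed
  have Fm[measurable]: "(\<lambda>t. F x t) \<in> borel_measurable lborel" for x
  proof -
    have "(\<lambda>(t,y). ennreal (norm (fb t (x + y)) + norm (b t (x + y)) + c t (x + y)) * indicator (ball 0 1) y)
        \<in> borel_measurable (lborel \<Otimes>\<^sub>M lborel)"
      unfolding pair_borel_cong by measurable
    from lborel.borel_measurable_nn_integral[OF this] show ?thesis unfolding F_def by simp
  qed
  have AEall: "AE s in lborel. \<forall>x\<in>k. s \<in> {-\<tau>..\<tau>} \<longrightarrow> F x s < \<infinity>"
    using A3 by (intro eventually_ball_finite k(1)) auto
  have "(\<integral>\<^sup>+ s \<in> {-\<tau>..\<tau>}. \<integral>\<^sup>+ z \<in> ball 0 R. ennreal (h s z) \<partial>lborel \<partial>lborel)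
     \<le> (\<integral>\<^sup>+ s. (\<Sum>x\<in>k. ennreal (C1 x + C2 x * enn2real (F x s) powr r) * indicator {-\<tau>..\<tau>} s) \<partial>lborel)"
  proof (rule nn_integral_mono_AE)
    show "AE s in lborel. (\<integral>\<^sup>+ z \<in> ball 0 R. ennreal (h s z) \<partial>lborel) * indicator {-\<tau>..\<tau>} s
        \<le> (\<Sum>x\<in>k. ennreal (C1 x + C2 x * enn2real (F x s) powr r) * indicator {-\<tau>..\<tau>} s)"
      using AEall
    proof eventually_elim
      case (elim s)
      show ?case
      proof (cases "s \<in> {-\<tau>..\<tau>}")
        case True
        have "(\<integral>\<^sup>+ z \<in> ball 0 R. ennreal (h s z) \<partial>lborel) \<le> (\<Sum>x\<in>k. \<integral>\<^sup>+ z \<in> ball x \<rho>\<^sub>1. ennreal (h s z) \<partial>lborel)"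
          by (rule space)
        also have "\<dots> \<le> (\<Sum>x\<in>k. ennreal (C1 x + C2 x * enn2real (F x s) powr r))"
          using elim True by (intro sum_mono slice) auto
        finally show ?thesis using True by simp
      qed simp
    qed
  qed
  also have "\<dots> = (\<Sum>x\<in>k. \<integral>\<^sup>+ s. ennreal (C1 x + C2 x * enn2real (F x s) powr r) * indicator {-\<tau>..\<tau>} s \<partial>lborel)"
    by (rule nn_integral_sum) measurable
  also have "\<dots> < \<infinity>"
  proof -
  have "\<forall>x\<in>k. (\<integral>\<^sup>+ s. ennreal (C1 x + C2 x * enn2real (F x s) powr r) * indicator {-\<tau>..\<tau>} s \<partial>lborel) < \<infinity>"
  proof (intro ballI)
    fix x assume "x \<in> k"
    have "(\<integral>\<^sup>+ s. ennreal (C1 x + C2 x * enn2real (F x s) powr r) * indicator {-\<tau>..\<tau>} s \<partial>lborel)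
      = (\<integral>\<^sup>+ s. ennreal (C1 x) * indicator {-\<tau>..\<tau>} s + ennreal (C2 x) * (ennreal (enn2real (F x s) powr r) * indicator {-\<tau>..\<tau>} s) \<partial>lborel)"
    proof (intro nn_integral_cong)
      fix s
      have "ennreal (C1 x + C2 x * enn2real (F x s) powr r) = ennreal (C1 x) + ennreal (C2 x) * ennreal (enn2real (F x s) powr r)"
        using C1nn[of x] C2nn[of x] by (simp add: ennreal_mult)
      then show "ennreal (C1 x + C2 x * enn2real (F x s) powr r) * indicator {-\<tau>..\<tau>} s
        = ennreal (C1 x) * indicator {-\<tau>..\<tau>} s + ennreal (C2 x) * (ennreal (enn2real (F x s) powr r) * indicator {-\<tau>..\<tau>} s)"
        by (simp add: distrib_right mult.assoc)
    qed
    also have "\<dots> = ennreal (C1 x) * emeasure lborel {-\<tau>..\<tau>} + ennreal (C2 x) * (\<integral>\<^sup>+ s \<in> {-\<tau>..\<tau>}. ennreal (enn2real (F x s) powr r) \<partial>lborel)"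
      apply (subst nn_integral_add)
      subgoal by measurable
      subgoal by measurable
      apply (subst nn_integral_cmult)
      subgoal by measurable
      apply (subst nn_integral_cmult)
      subgoal by measurable
      by (simp add: nn_integral_cmult_indicator)
    also have "\<dots> < \<infinity>"
      using A3[of x] assms(15) by (simp add: ennreal_mult_less_top emeasure_lborel_Icc)
    finally show "(\<integral>\<^sup>+ s. ennreal (C1 x + C2 x * enn2real (F x s) powr r) * indicator {-\<tau>..\<tau>} s \<partial>lborel) < \<infinity>" .
  qed
  then show ?thesis using ennreal_sum_less_top[OF k(1)] by simp
  qed
  finally show ?thesis unfolding h_def r_def .
qed

end
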